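(* Let $T$ be a triangle with diameter $h_T$ and inradius $r_T$, $h_T\le\varrho r_T$, let $\Gamma_{h,T}$ be an open line segment with endpoints on $\partial T$ dividing $T$ into two nonempty open parts $T_h^\pm$, and let $\mu^\pm>0$. Let $(\boldsymbol{\phi}^{IFE}_{i,T},\varphi^{IFE}_{i,T})\in\mathbf{V}M_h^{IFE}(T)$, $i=1,\dots,7$, be the IFE basis functions, i.e. $N_{j,T}(\boldsymbol{\phi}^{IFE}_{i,T},\varphi^{IFE}_{i,T})=\delta_{ij}$ for $i,j=1,\dots,7$. Then there is a constant $C>0$ depending only on $\mu^\pm$ and $\varrho$ such that for $m=0,1$: $$|(\boldsymbol{\phi}^{IFE}_{i,T})^\pm|_{W^m_\infty(T)}\le Ch_T^{-m},\quad \|(\varphi^{IFE}_{i,T})^\pm\|_{L^\infty(T)}\le Ch_T^{-1},\quad i=1,\dots,6,$$ $$|(\boldsymbol{\phi}^{IFE}_{7,T})^\pm|_{W^m_\infty(T)}=0,\qquad \|(\varphi^{IFE}_{7,T})^\pm\|_{L^\infty(T)}=1.$$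
   Context: $\mathbf{n}_h$ is the unit normal of $\Gamma_{h,T}$ pointing into $T_h^+$. $\sigma(\mu,\mathbf{v},q)=2\mu\boldsymbol{\epsilon}(\mathbf{v})-q\mathbb{I}$, $\boldsymbol{\epsilon}(\mathbf{v})=\frac12(\nabla\mathbf{v}+(\nabla\mathbf{v})^T)$; for polynomials $g^\pm$, $[\![g^\pm]\!]=g^+-g^-$. The local IFE space $\mathbf{V}M_h^{IFE}(T)$ consists of pairs $(\mathbf{v},q)$ with $\mathbf{v}=\mathbf{v}^\pm$, $q=q^\pm$ on $T_h^\pm$, where $\mathbf{v}^\pm\in P_1(T)^2$, $q^\pm\in P_0(T)$ satisfy $[\![\sigma(\mu^\pm,\mathbf{v}^\pm,q^\pm)\mathbf{n}_h]\!]=\mathbf{0}$, $\mathbf{v}^+=\mathbf{v}^-$ on $\Gamma_{h,T}$, $[\![\nabla\cdot\mathbf{v}^\pm]\!]=0$; for such a pair, $(\cdot)^\pm$ denotes the polynomial pieces $\mathbf{v}^\pm$, $q^\pm$ regarded on all of $T$. The degrees of freedom, for edges $e_1,e_2,e_3$ and $\mathbf{v}=(v_1,v_2)^T$, are $N_{i,T}=|e_i|^{-1}\int_{e_i}v_1$, $N_{3+i,T}=|e_i|^{-1}\int_{e_i}v_2$ ($i=1,2,3$), $N_{7,T}=|T|^{-1}\int_Tq$; the pairs in $\mathbf{V}M_h^{IFE}(T)$ are uniquely determined by these values. *)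

theory Defs
  imports "HOL-Analysis.Analysis"
begin

text \<open>Points of the plane are real^2; the triangle T with vertices a b c is the closed
  convex hull; edges e1 = [b,c], e2 = [c,a], e3 = [a,b].\<close>

definition tri :: "real^2 \<Rightarrow> real^2 \<Rightarrow> real^2 \<Rightarrow> (real^2) set" where
  "tri a b c = convex hull {a, b, c}"

definition inradius :: "(real^2) set \<Rightarrow> real" where
  "inradius T = Sup {r. \<exists>x. cball x r \<subseteq> T}"

text \<open>Interface: the line {x. n \<bullet> x = d}, with unit normal n pointing into T^+.\<close>
definition Tplus :: "(real^2) set \<Rightarrow> real^2 \<Rightarrow> real \<Rightarrow> (real^2) set" where
  "Tplus T n d = {x \<in> interior T. n \<bullet> x > d}"

definition Tminus :: "(real^2) set \<Rightarrow> real^2 \<Rightarrow> real \<Rightarrow> (real^2) set" where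
  "Tminus T n d = {x \<in> interior T. n \<bullet> x < d}"

definition Gamma :: "(real^2) set \<Rightarrow> real^2 \<Rightarrow> real \<Rightarrow> (real^2) set" where
  "Gamma T n d = {x \<in> interior T. n \<bullet> x = d}"

definition pw :: "real^2 \<Rightarrow> real \<Rightarrow> (real^2 \<Rightarrow> 'b) \<Rightarrow> (real^2 \<Rightarrow> 'b) \<Rightarrow> real^2 \<Rightarrow> 'b" where
  "pw n d fp fm x = (if n \<bullet> x > d then fp x else fm x)"

text \<open>The local IFE space: v^\<pm>(x) = A^\<pm> x + b^\<pm> (P1), q^\<pm> constants.
  sigma(mu,v,q) n = (mu (A + A^T) - q I) n; div v = trace A.\<close>
definition is_ife ::
  "real \<Rightarrow> real \<Rightarrow> (real^2) set \<Rightarrow> real^2 \<Rightarrow> real \<Rightarrow>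
   real^2^2 \<Rightarrow> real^2 \<Rightarrow> real \<Rightarrow> real^2^2 \<Rightarrow> real^2 \<Rightarrow> real \<Rightarrow> bool" where
  "is_ife mup mum T n d Ap bp qp Am bm qm \<longleftrightarrow>
     (mup *\<^sub>R (Ap + transpose Ap) - qp *\<^sub>R mat 1) *v n
       = (mum *\<^sub>R (Am + transpose Am) - qm *\<^sub>R mat 1) *v n
     \<and> (\<forall>x \<in> Gamma T n d. Ap *v x + bp = Am *v x + bm)
     \<and> trace Ap = trace Am"

text \<open>Edge average |e|^{-1} \<integral>_e f for the edge [p,q].\<close>
definition edge_avg :: "(real^2 \<Rightarrow> real) \<Rightarrow> real^2 \<Rightarrow> real^2 \<Rightarrow> real" where
  "edge_avg f p q = integral {0..1} (\<lambda>t. f (p + t *\<^sub>R (q - p)))"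

definition edge_start :: "real^2 \<Rightarrow> real^2 \<Rightarrow> real^2 \<Rightarrow> nat \<Rightarrow> real^2" where
  "edge_start a b c k = (if k = 1 then b else if k = 2 then c else a)"

definition edge_end :: "real^2 \<Rightarrow> real^2 \<Rightarrow> real^2 \<Rightarrow> nat \<Rightarrow> real^2" where
  "edge_end a b c k = (if k = 1 then c else if k = 2 then a else b)"

definition dof ::
  "real^2 \<Rightarrow> real^2 \<Rightarrow> real^2 \<Rightarrow> real^2 \<Rightarrow> real \<Rightarrow>
   real^2^2 \<Rightarrow> real^2 \<Rightarrow> real \<Rightarrow> real^2^2 \<Rightarrow> real^2 \<Rightarrow> real \<Rightarrow> nat \<Rightarrow> real" where
  "dof a b c n d Ap bp qp Am bm qm j =
     (let v = pw n d (\<lambda>x. Ap *v x + bp) (\<lambda>x. Am *v x + bm);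
          q = pw n d (\<lambda>x. qp) (\<lambda>x. qm) in
      if j \<in> {1, 2, 3} then edge_avg (\<lambda>x. v x $ 1) (edge_start a b c j) (edge_end a b c j)
      else if j \<in> {4, 5, 6} then
        edge_avg (\<lambda>x. v x $ 2) (edge_start a b c (j - 3)) (edge_end a b c (j - 3))
      else integral (tri a b c) q / measure lebesgue (tri a b c))"

end

theory Submission
  imports Defs
begin
definition Fm :: "real \<Rightarrow> real \<Rightarrow> real" where
  "Fm x y = (if x = y then min x 0 else ((min y 0)^2 - (min x 0)^2) / (2*(y-x)))"

lemma Fm_integral:
  "((\<lambda>\<tau>. min (x + \<tau>*(y-x)) 0) has_integral Fm x y) {0..1}"
proof (cases "x = y")
  case True
  then show ?thesis unfolding Fm_def using has_integral_const_real[of "min x 0" 0 1] by simp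
next
  case False
  define k where "k = y - x"
  have k: "k \<noteq> 0" using False k_def by auto
  define f where "f = (\<lambda>\<tau>. (min (x + \<tau>*k) 0)^2 / (2*k))"
  have der: "(f has_vector_derivative (min (x + \<tau>*k) 0)) (at \<tau>)" if "\<tau> \<notin> {-x/k}" for \<tau>
  proof -
    have ne: "x + \<tau>*k \<noteq> 0" using that k by (auto simp: field_simps)
    show ?thesis
    proof (cases "x + \<tau>*k < 0")
      case True
      have d: "((\<lambda>\<tau>. (x + \<tau>*k)^2 / (2*k)) has_field_derivative (x + \<tau>*k)) (at \<tau>)"
        using k by (auto intro!: derivative_eq_intros simp: field_simps power2_eq_square)
      have "(f has_field_derivative (x + \<tau>*k)) (at \<tau>)"
        apply (rule has_field_derivative_transform_within_open[OF d, of "{s. x + s*k < 0}"])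
        using True by (auto simp: f_def intro!: open_Collect_less continuous_intros)
      then show ?thesis using True by (simp add: has_real_derivative_iff_has_vector_derivative)
    next
      case False
      with ne have pos: "x + \<tau>*k > 0" by auto
      have d: "((\<lambda>\<tau>. 0) has_field_derivative 0) (at \<tau>)" by simp
      have "(f has_field_derivative 0) (at \<tau>)"
        apply (rule has_field_derivative_transform_within_open[OF d, of "{s. x + s*k > 0}"])
        using pos by (auto simp: f_def intro!: open_Collect_less continuous_intros)
      then show ?thesis using pos by (simp add: has_real_derivative_iff_has_vector_derivative)
    qed
  qed
  have "((\<lambda>\<tau>. min (x + \<tau>*k) 0) has_integral (f 1 - f 0)) {0..1}"
    apply (rule fundamental_theorem_of_calculus_interior_strong[of "{-x/k}"])
    using der k by (auto simp: f_def intro!: continuous_intros)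
  moreover have "f 1 - f 0 = Fm x y" using False by (simp add: f_def Fm_def k_def diff_divide_distrib)
  ultimately show ?thesis by (simp add: k_def)
qed

lemma Fm_sym: "Fm x y = Fm y x"
  unfolding Fm_def by (auto simp: field_simps)

lemma Fm_neg: "x \<le> 0 \<Longrightarrow> y \<le> 0 \<Longrightarrow> Fm x y = (x+y)/2"
  unfolding Fm_def by (auto simp: field_simps power2_eq_square min_def)

lemma Fm_pos: "x \<ge> 0 \<Longrightarrow> y \<ge> 0 \<Longrightarrow> Fm x y = 0"
  unfolding Fm_def by (auto simp: min_def)

lemma Fm_mix: "x < 0 \<Longrightarrow> y \<ge> 0 \<Longrightarrow> Fm x y = x^2/(2*(x-y))"
  unfolding Fm_def by (auto simp: min_def field_simps)

lemma Fm_bound: "\<bar>x\<bar> \<le> h \<Longrightarrow> \<bar>y\<bar> \<le> h \<Longrightarrow> \<bar>Fm x y\<bar> \<le> h"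
proof -
  have main: "\<bar>Fm x y\<bar> \<le> h" if "\<bar>x\<bar> \<le> h" "\<bar>y\<bar> \<le> h" "x \<le> y" for x y
  proof -
    consider "y \<le> 0" | "x \<ge> 0" | "x < 0" "y \<ge> 0" by linarith
    then show ?thesis
    proof cases
      case 1 then show ?thesis using that by (simp add: Fm_neg)
    next
      case 2 then show ?thesis using that by (simp add: Fm_pos)
    next
      case 3
      have "x*y \<le> 0" using 3 by (simp add: mult_nonpos_nonneg)
      then have "x^2/(2*(y-x)) \<le> -x/2" using 3 by (simp add: field_simps power2_eq_square)
      moreover have "x^2/(2*(y-x)) \<ge> 0" using 3 by simp
      moreover have "Fm x y = -(x^2/(2*(y-x)))" using Fm_mix[of x y] 3
        by (simp add: divide_simps) (simp add: algebra_simps)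
      ultimately show ?thesis using 3 that by (simp add: abs_if)
    qed
  qed
  show "\<bar>x\<bar> \<le> h \<Longrightarrow> \<bar>y\<bar> \<le> h \<Longrightarrow> \<bar>Fm x y\<bar> \<le> h"
    using main[of x y] main[of y x] Fm_sym[of x y] by linarith
qed

definition Pabc where
  "Pabc a b c \<longleftrightarrow> (\<exists>s k. 0 \<le> s \<and> s \<le> 1 \<and> Fm b c = s*(b+c)/2 + k \<and> Fm c a = s*(c+a)/2 + k
      \<and> Fm a b = s*(a+b)/2 + k)"

lemma Pabc_sorted: assumes "a \<le> b" "b \<le> c" shows "Pabc a b c"
proof -
  consider "c \<le> 0" | "a \<ge> 0" | "a < 0" "b \<ge> 0" | "b < 0" "c > 0" by linarith
  then show ?thesis
  proof cases
    case 1 then show ?thesis unfolding Pabc_def using assms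
      by (intro exI[of _ 1] exI[of _ 0]) (simp add: Fm_neg)
  next
    case 2 then show ?thesis unfolding Pabc_def using assms
      by (intro exI[of _ 0] exI[of _ 0]) (simp add: Fm_pos)
  next
    case 3
    define s where "s = a^2/((a-b)*(a-c))"
    have e: "(a-b)*(a-c) - a^2 = (-a)*(b+c) + b*c" by (simp add: algebra_simps power2_eq_square)
    have "0 \<le> (-a)*(b+c)" "0 \<le> b*c" using 3 assms mult_nonneg_nonneg[of "-a" "b+c"] by simp_all
    then have pp: "(a-b)*(a-c) \<ge> a^2" using e by linarith
    have "0 < a^2" using 3 by simp
    then have den: "(a-b)*(a-c) > 0" using pp by linarith
    have s01: "0 \<le> s" "s \<le> 1" unfolding s_def using den pp by (simp_all add: divide_le_eq)
    have ab: "a - b \<noteq> 0" "a - c \<noteq> 0" using 3 assms by auto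
    define k where "k = -s*(b+c)/2"
    have sa0: "s*((a-b)*(a-c)) = a^2" using den unfolding s_def
      by (metis less_irrefl nonzero_eq_divide_eq)
    then have sa: "s*(a-b)*(a-c) = a^2" by (simp add: mult.assoc)
    have e1: "Fm b c = s*(b+c)/2 + k" using 3 assms by (simp add: Fm_pos k_def)
    have "Fm c a = a^2/(2*(a-c))" using Fm_mix[of a c] Fm_sym[of c a] 3 assms by simp
    also have "\<dots> = s*(c+a)/2 + k" using ab sa unfolding k_def
      by (simp add: field_simps)
    finally have e2: "Fm c a = s*(c+a)/2 + k" .
    have "Fm a b = a^2/(2*(a-b))" using Fm_mix[of a b] 3 assms by simp
    also have "\<dots> = s*(a+b)/2 + k" using ab sa unfolding k_def
      by (simp add: field_simps)
    finally have e3: "Fm a b = s*(a+b)/2 + k" .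
    show ?thesis unfolding Pabc_def using s01 e1 e2 e3 by blast
  next
    case 4
    define s where "s = c^2/((c-a)*(c-b))"
    have e: "(c-a)*(c-b) - c^2 = (-c)*(a+b) + a*b" by (simp add: algebra_simps power2_eq_square)
    have "0 \<le> (-c)*(a+b)" "0 \<le> a*b" using 4 assms mult_nonneg_nonneg[of "c" "-(a+b)"]
      mult_nonpos_nonpos[of a b] mult_pos_neg[of c "a+b"] by simp_all
    then have pp: "(c-a)*(c-b) \<ge> c^2" using e by linarith
    have "0 < c^2" using 4 by simp
    then have den: "(c-a)*(c-b) > 0" using pp by linarith
    have s01: "0 \<le> s" "s \<le> 1" unfolding s_def using den pp by (simp_all add: divide_le_eq)
    have ab: "c - b \<noteq> 0" "c - a \<noteq> 0" using 4 assms by auto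
    define k where "k = s*(a+b)/2"
    have sa0: "s*((c-a)*(c-b)) = c^2" using den unfolding s_def
      by (metis less_irrefl nonzero_eq_divide_eq)
    then have sa: "s*(c-a)*(c-b) = c^2" by (simp add: mult.assoc)
    have e1: "Fm a b = (1-s)*(a+b)/2 + k" using 4 assms by (simp add: Fm_neg k_def field_simps)
    have "Fm c a = -(c^2)/(2*(c-a)) + (a+c)/2"
      using Fm_mix[of a c] Fm_sym[of c a] 4 assms
      by (simp add: Fm_def min_def field_simps power2_eq_square)
    also have "\<dots> = (1-s)*(c+a)/2 + k" using ab sa unfolding k_def
      by (simp add: field_simps)
    finally have e2: "Fm c a = (1-s)*(c+a)/2 + k" .
    have "Fm b c = -(c^2)/(2*(c-b)) + (b+c)/2"
      using 4 assms
      by (simp add: Fm_def min_def field_simps power2_eq_square)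
    also have "\<dots> = (1-s)*(b+c)/2 + k" using ab sa unfolding k_def
      by (simp add: field_simps)
    finally have e3: "Fm b c = (1-s)*(b+c)/2 + k" .
    show ?thesis unfolding Pabc_def using s01 e1 e2 e3
      by (intro exI[of _ "1-s"] exI[of _ k]) auto
  qed
qed

lemma Pabc_perm: "Pabc a b c \<Longrightarrow> Pabc b a c" "Pabc a b c \<Longrightarrow> Pabc a c b"
  unfolding Pabc_def by (metis Fm_sym add.commute)+

lemma Pabc_all: "Pabc a b c"
  by (metis Pabc_perm Pabc_sorted linear)

lemma aff_mid_repr:
  fixes g :: "real^2 \<Rightarrow> 'b::real_normed_vector"
  assumes lin: "linear g" and x: "x \<in> tri a b c"
  shows "\<exists>ka kb kc. \<bar>ka\<bar> \<le> 1 \<and> \<bar>kb\<bar> \<le> 1 \<and> \<bar>kc\<bar> \<le> 1 \<and>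
     g x + c0 = ka *\<^sub>R (g ((1/2) *\<^sub>R (b+c)) + c0) + kb *\<^sub>R (g ((1/2) *\<^sub>R (c+a)) + c0)
       + kc *\<^sub>R (g ((1/2) *\<^sub>R (a+b)) + c0)"
proof -
  obtain u v w where uvw: "0 \<le> u" "0 \<le> v" "0 \<le> w" "u+v+w = 1"
    and xe: "x = u *\<^sub>R a + v *\<^sub>R b + w *\<^sub>R c"
    using x unfolding tri_def convex_hull_3 by blast
  define ka where "ka = 1 - 2 * u"
  define kb where "kb = 1 - 2 * v"
  define kc where "kc = 1 - 2 * w"
  have xs: "x = ka *\<^sub>R ((1/2) *\<^sub>R (b+c)) + kb *\<^sub>R ((1/2) *\<^sub>R (c+a)) + kc *\<^sub>R ((1/2) *\<^sub>R (a+b))"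
  proof -
    have "ka *\<^sub>R ((1/2) *\<^sub>R (b+c)) + kb *\<^sub>R ((1/2) *\<^sub>R (c+a)) + kc *\<^sub>R ((1/2) *\<^sub>R (a+b))
      = ((kb+kc)/2) *\<^sub>R a + ((ka+kc)/2) *\<^sub>R b + ((ka+kb)/2) *\<^sub>R c"
      by (simp add: scaleR_add_right add_divide_distrib scaleR_left_distrib algebra_simps)
    also have "\<dots> = x"
    proof -
      have "(kb+kc)/2 = u" "(ka+kc)/2 = v" "(ka+kb)/2 = w" using uvw unfolding ka_def kb_def kc_def
        by simp_all
      then show ?thesis unfolding xe by simp
    qed
    finally show ?thesis by simp
  qed
  have s1: "ka + kb + kc = 1" using uvw unfolding ka_def kb_def kc_def by simp
  have "g x + c0 = ka *\<^sub>R g ((1/2) *\<^sub>R (b+c)) + kb *\<^sub>R g ((1/2) *\<^sub>R (c+a))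
       + kc *\<^sub>R g ((1/2) *\<^sub>R (a+b)) + (ka + kb + kc) *\<^sub>R c0"
    using s1 by (subst xs) (simp add: linear_add[OF lin] linear_scale[OF lin])
  also have "\<dots> = ka *\<^sub>R (g ((1/2) *\<^sub>R (b+c)) + c0) + kb *\<^sub>R (g ((1/2) *\<^sub>R (c+a)) + c0)
       + kc *\<^sub>R (g ((1/2) *\<^sub>R (a+b)) + c0)"
    by (simp add: scaleR_add_right scaleR_add_left algebra_simps)
  finally show ?thesis
    using uvw unfolding ka_def kb_def kc_def
    by (intro exI[of _ "1-2 * u"] exI[of _ "1-2 * v"] exI[of _ "1-2 * w"]) auto
qed

lemma aff_mid_bound:
  fixes g :: "real^2 \<Rightarrow> 'b::real_normed_vector"
  assumes lin: "linear g" and x: "x \<in> tri a b c"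
  shows "norm (g x + c0) \<le> norm (g ((1/2) *\<^sub>R (b+c)) + c0) + norm (g ((1/2) *\<^sub>R (c+a)) + c0)
       + norm (g ((1/2) *\<^sub>R (a+b)) + c0)"
proof -
  obtain ka kb kc where m: "\<bar>ka\<bar> \<le> 1" "\<bar>kb\<bar> \<le> 1" "\<bar>kc\<bar> \<le> 1" and
     e: "g x + c0 = ka *\<^sub>R (g ((1/2) *\<^sub>R (b+c)) + c0) + kb *\<^sub>R (g ((1/2) *\<^sub>R (c+a)) + c0)
       + kc *\<^sub>R (g ((1/2) *\<^sub>R (a+b)) + c0)"
    using aff_mid_repr[OF lin x] by blast
  let ?A = "g ((1/2) *\<^sub>R (b+c)) + c0" and ?B = "g ((1/2) *\<^sub>R (c+a)) + c0" and ?C = "g ((1/2) *\<^sub>R (a+b)) + c0"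
  have "norm (g x + c0) \<le> norm (ka *\<^sub>R ?A) + norm (kb *\<^sub>R ?B) + norm (kc *\<^sub>R ?C)"
    unfolding e by (meson norm_triangle_ineq order_trans add_right_mono)
  also have "\<dots> \<le> norm ?A + norm ?B + norm ?C"
    using m by (intro add_mono) (auto intro: mult_left_le_one_le simp: mult_le_one)
  finally show ?thesis .
qed

lemma ball_grad:
  fixes g :: "real^2 \<Rightarrow> 'b::real_normed_vector"
  assumes lin: "linear g" and r: "r > 0" and sub: "cball x0 r \<subseteq> T"
    and bd: "\<And>y. y \<in> T \<Longrightarrow> norm (g y + c0) \<le> M" and e: "norm e = 1"
  shows "norm (g e) \<le> M / r"
proof -
  have p1: "x0 + r *\<^sub>R e \<in> T" "x0 - r *\<^sub>R e \<in> T" using sub r e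
    by (auto simp: dist_norm subset_iff)
  have "(g (x0 + r *\<^sub>R e) + c0) - (g (x0 - r *\<^sub>R e) + c0) = r *\<^sub>R g e + r *\<^sub>R g e"
    by (simp add: linear_add[OF lin] linear_diff[OF lin] linear_scale[OF lin])
  also have "\<dots> = (2*r) *\<^sub>R g e" by (metis mult_2 scaleR_left_distrib)
  finally have "(g (x0 + r *\<^sub>R e) + c0) - (g (x0 - r *\<^sub>R e) + c0) = (2*r) *\<^sub>R g e"
    by (metis mult_2 scaleR_left_distrib)
  moreover have "norm ((g (x0 + r *\<^sub>R e) + c0) - (g (x0 - r *\<^sub>R e) + c0)) \<le> M + M"
    using bd[OF p1(1)] bd[OF p1(2)] norm_triangle_ineq4[of "g (x0 + r *\<^sub>R e) + c0" "g (x0 - r *\<^sub>R e) + c0"]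
    by linarith
  ultimately have "norm ((2*r) *\<^sub>R g e) \<le> M + M" by simp
  then have "2*r*norm (g e) \<le> 2*M" using r by simp
  then show ?thesis using r by (simp add: field_simps)
qed

lemma mat_norm_cols:
  fixes A :: "real^2^2"
  shows "norm A \<le> 2 * (norm (A *v axis 1 1) + norm (A *v axis 2 1))"
proof -
  have "norm A \<le> (\<Sum>i\<in>UNIV. norm (A$i))" unfolding norm_vec_def by (rule L2_set_le_sum) simp
  also have "\<dots> \<le> (\<Sum>i\<in>UNIV. \<Sum>j\<in>UNIV. \<bar>A$i$j\<bar>)" by (intro sum_mono norm_le_l1_cart)
  also have "\<dots> \<le> (\<Sum>i\<in>(UNIV::2 set). norm (A *v axis 1 1) + norm (A *v axis 2 1))"
  proof (intro sum_mono)
    fix i :: 2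
    have "\<bar>A$i$j\<bar> \<le> norm (A *v axis j 1)" for j
      using component_le_norm_cart[of "A *v axis j 1" i]
      by (simp add: matrix_vector_mult_def axis_def if_distrib cong: if_cong)
    then show "(\<Sum>j\<in>UNIV. \<bar>A$i$j\<bar>) \<le> norm (A *v axis 1 1) + norm (A *v axis 2 1)"
      by (simp add: sum_2 add_mono)
  qed
  also have "\<dots> = 2 * (norm (A *v axis 1 1) + norm (A *v axis 2 1))" by (simp add: sum_2)
  finally show ?thesis .
qed

lemma alg1:
  fixes n1 n2 p11 p12 p21 p22 m11 m12 m21 m22 :: real
  assumes "n1^2 + n2^2 = 1"
    "p11*(-n2) + p12*n1 = m11*(-n2) + m12*n1"
    "p21*(-n2) + p22*n1 = m21*(-n2) + m22*n1"
    "p11 + p22 = m11 + m22"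
  defines "\<beta> \<equiv> -n2*((p11-m11)*n1 + (p12-m12)*n2) + n1*((p21-m21)*n1 + (p22-m22)*n2)"
  shows "m11 = p11 - \<beta>*(-n2)*n1" "m12 = p12 - \<beta>*(-n2)*n2" "m21 = p21 - \<beta>*n1*n1" "m22 = p22 - \<beta>*n1*n2"
  using assms unfolding \<beta>_def by algebra+

lemma alg2:
  fixes n1 n2 p11 p12 p21 p22 m11 m12 m21 m22 mup mum qp qm \<beta> :: real
  assumes "n1^2 + n2^2 = 1"
    "m11 = p11 - \<beta>*(-n2)*n1" "m12 = p12 - \<beta>*(-n2)*n2" "m21 = p21 - \<beta>*n1*n1" "m22 = p22 - \<beta>*n1*n2"
    "mup*((p11+p11)*n1 + (p12+p21)*n2) - qp*n1 = mum*((m11+m11)*n1 + (m12+m21)*n2) - qm*n1"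
    "mup*((p21+p12)*n1 + (p22+p22)*n2) - qp*n2 = mum*((m21+m12)*n1 + (m22+m22)*n2) - qm*n2"
  shows "(mup - mum) * ((-n2)*(p11*n1+p12*n2) + n1*(p21*n1+p22*n2) + n1*(p11*(-n2)+p12*n1) + n2*(p21*(-n2)+p22*n1)) + mum*\<beta> = 0"
    "qp - qm = 2*(mup-mum)*(n1*(p11*n1+p12*n2) + n2*(p21*n1+p22*n2))"
  using assms by algebra+

lemma inner2: "(x::real^2) \<bullet> y = x$1*y$1 + x$2*y$2"
  by (simp add: inner_vec_def sum_2)

lemma mv2: "((A::real^2^2) *v x)$1 = A$1$1*x$1 + A$1$2*x$2" "((A::real^2^2) *v x)$2 = A$2$1*x$1 + A$2$2*x$2"
  by (simp_all add: matrix_vector_mult_def sum_2)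

lemma norm2sq: "(norm (x::real^2))^2 = x$1^2 + x$2^2"
proof -
  have "(norm x)^2 = x \<bullet> x" by (rule power2_norm_eq_inner)
  then show ?thesis by (simp add: inner2 power2_eq_square)
qed

lemma interface:
  fixes n :: "real^2" and Ap Am :: "real^2^2"
  assumes nn: "norm n = 1" and Tp: "Tplus T n d \<noteq> {}" and Tm: "Tminus T n d \<noteq> {}"
    and cv: "convex T"
    and cont: "\<forall>x\<in>Gamma T n d. Ap *v x + bp = Am *v x + bm" and tr: "trace Ap = trace Am"
  defines "t \<equiv> vector [-(n$2), n$1] :: real^2"
  defines "\<beta> \<equiv> t \<bullet> ((Ap - Am) *v n)"
  shows "\<forall>y. Am *v y = Ap *v y - (\<beta>*(n \<bullet> y)) *\<^sub>R t"
    and "\<forall>y. Am *v y + bm = Ap *v y + bp - (\<beta>*(n \<bullet> y - d)) *\<^sub>R t"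
    and "norm t = 1" and "n \<bullet> t = 0" and "t$1 = -(n$2)" and "t$2 = n$1"
proof -
  show t1: "t$1 = -(n$2)" and t2: "t$2 = n$1" unfolding t_def by simp_all
  have n1: "n$1^2 + n$2^2 = 1" using nn norm2sq[of n] by simp
  have "(norm t)^2 = 1" using n1 norm2sq[of t] t1 t2 by (simp add: power2_eq_square)
  then show nt: "norm t = 1" using norm_ge_zero[of t] by (auto simp: power2_eq_1_iff)
  show nt0: "n \<bullet> t = 0" using t1 t2 by (simp add: inner2)
  obtain xp where xp: "xp \<in> interior T" "n \<bullet> xp > d" using Tp unfolding Tplus_def by blast
  obtain xm where xm: "xm \<in> interior T" "n \<bullet> xm < d" using Tm unfolding Tminus_def by blast
  define \<theta> where "\<theta> = (d - n \<bullet> xm) / (n \<bullet> xp - n \<bullet> xm)"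
  have th: "0 < \<theta>" "\<theta> < 1" using xp xm unfolding \<theta>_def by (auto simp: field_simps)
  define x0 where "x0 = (1 - \<theta>) *\<^sub>R xm + \<theta> *\<^sub>R xp"
  have x0i: "x0 \<in> interior T" unfolding x0_def
    using convexD[OF convex_interior[OF cv] xm(1) xp(1), of "1-\<theta>" \<theta>] th by simp
  have x0d: "n \<bullet> x0 = d" unfolding x0_def \<theta>_def using xp xm
    by (simp add: inner_add_right algebra_simps) (simp add: field_simps)
  obtain \<epsilon> where e: "\<epsilon> > 0" "ball x0 \<epsilon> \<subseteq> interior T"
    using open_contains_ball x0i open_interior by blast
  define x1 where "x1 = x0 + (\<epsilon>/2) *\<^sub>R t"
  have "dist x0 x1 < \<epsilon>" unfolding x1_def dist_norm using e nt by simp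
  then have x1i: "x1 \<in> interior T" using e by auto
  have x1d: "n \<bullet> x1 = d" unfolding x1_def using x0d nt0 by (simp add: inner_add_right)
  have g0: "x0 \<in> Gamma T n d" "x1 \<in> Gamma T n d" unfolding Gamma_def using x0i x1i x0d x1d by auto
  have c0: "Ap *v x0 + bp = Am *v x0 + bm" and c1: "Ap *v x1 + bp = Am *v x1 + bm" using cont g0 by auto
  have q1: "(\<epsilon>/2) *\<^sub>R (Ap *v t) = (Ap *v x1 + bp) - (Ap *v x0 + bp)"
    unfolding x1_def by (simp add: matrix_vector_right_distrib matrix_vector_mult_scaleR)
  have q2: "(\<epsilon>/2) *\<^sub>R (Am *v t) = (Am *v x1 + bm) - (Am *v x0 + bm)"
    unfolding x1_def by (simp add: matrix_vector_right_distrib matrix_vector_mult_scaleR)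
  have "(\<epsilon>/2) *\<^sub>R (Ap *v t) = (\<epsilon>/2) *\<^sub>R (Am *v t)"
    unfolding q1 q2 c0 c1 ..
  then have At: "Ap *v t = Am *v t" using e by simp
  then have At1: "Ap$1$1*(-(n$2)) + Ap$1$2*n$1 = Am$1$1*(-(n$2)) + Am$1$2*n$1"
    and At2: "Ap$2$1*(-(n$2)) + Ap$2$2*n$1 = Am$2$1*(-(n$2)) + Am$2$2*n$1"
    using t1 t2 by (metis mv2)+
  have tr2: "Ap$1$1 + Ap$2$2 = Am$1$1 + Am$2$2" using tr by (simp add: trace_def sum_2)
  have bdef: "\<beta> = -(n$2)*((Ap$1$1-Am$1$1)*n$1 + (Ap$1$2-Am$1$2)*n$2) + n$1*((Ap$2$1-Am$2$1)*n$1 + (Ap$2$2-Am$2$2)*n$2)"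
    unfolding \<beta>_def using t1 t2 by (simp add: inner2 mv2)
  note ent = alg1[OF n1 At1 At2 tr2, folded bdef]
  show lin: "\<forall>y. Am *v y = Ap *v y - (\<beta>*(n \<bullet> y)) *\<^sub>R t"
    by (simp add: vec_eq_iff forall_2 mv2 inner2 ent t1 t2 algebra_simps)
  show "\<forall>y. Am *v y + bm = Ap *v y + bp - (\<beta>*(n \<bullet> y - d)) *\<^sub>R t"
  proof
    fix y
    have bm: "bm = Ap *v x0 + bp - Am *v x0" using c0 by (simp add: algebra_simps)
    show "Am *v y + bm = Ap *v y + bp - (\<beta>*(n \<bullet> y - d)) *\<^sub>R t"
      unfolding bm lin[rule_format] using x0d by (simp add: algebra_simps scaleR_diff_left)
  qed
qed

lemma stress:
  fixes n t :: "real^2" and Ap Am :: "real^2^2"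
  assumes lin: "\<forall>y. Am *v y = Ap *v y - (\<beta>*(n \<bullet> y)) *\<^sub>R t"
    and t1: "t$1 = -(n$2)" and t2: "t$2 = n$1" and nn: "norm n = 1"
    and st: "(mup *\<^sub>R (Ap + transpose Ap) - qp *\<^sub>R mat 1) *v n = (mum *\<^sub>R (Am + transpose Am) - qm *\<^sub>R mat 1) *v n"
  shows "(mup-mum)*(t \<bullet> (Ap *v n) + n \<bullet> (Ap *v t)) + mum*\<beta> = 0"
    and "qp - qm = 2*(mup-mum)*(n \<bullet> (Ap *v n))"
proof -
  have n1: "n$1^2 + n$2^2 = 1" using nn norm2sq[of n] by simp
  have ax: "(Am *v axis j 1)$i = Am$i$j" "(Ap *v axis j 1)$i = Ap$i$j" for i j :: 2
    by (simp_all add: matrix_vector_mult_def axis_def if_distrib cong: if_cong)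
  have ent0: "Am$i$j = Ap$i$j - \<beta>*(n$j)*(t$i)" for i j :: 2
  proof -
    have "(Am *v axis j 1)$i = (Ap *v axis j 1 - (\<beta>*(n \<bullet> axis j 1)) *\<^sub>R t)$i" using lin by simp
    then show ?thesis by (simp add: inner_axis ax)
  qed
  have ent: "Am$1$1 = Ap$1$1 - \<beta>*(-(n$2))*(n$1)" "Am$1$2 = Ap$1$2 - \<beta>*(-(n$2))*(n$2)"
     "Am$2$1 = Ap$2$1 - \<beta>*(n$1)*(n$1)" "Am$2$2 = Ap$2$2 - \<beta>*(n$1)*(n$2)"
    using ent0[of 1 1] ent0[of 1 2] ent0[of 2 1] ent0[of 2 2] t1 t2 by (simp_all add: algebra_simps)
  have s1: "mup*((Ap$1$1+Ap$1$1)*n$1 + (Ap$1$2+Ap$2$1)*n$2) - qp*n$1 = mum*((Am$1$1+Am$1$1)*n$1 + (Am$1$2+Am$2$1)*n$2) - qm*n$1"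
    using arg_cong[OF st, of "\<lambda>v. v$1"] by (simp add: mv2 transpose_def mat_def algebra_simps)
  have s2: "mup*((Ap$2$1+Ap$1$2)*n$1 + (Ap$2$2+Ap$2$2)*n$2) - qp*n$2 = mum*((Am$2$1+Am$1$2)*n$1 + (Am$2$2+Am$2$2)*n$2) - qm*n$2"
    using arg_cong[OF st, of "\<lambda>v. v$2"] by (simp add: mv2 transpose_def mat_def algebra_simps)
  note r = alg2[OF n1 ent s1 s2]
  show "(mup-mum)*(t \<bullet> (Ap *v n) + n \<bullet> (Ap *v t)) + mum*\<beta> = 0"
    using r(1) by (simp add: inner2 mv2 t1 t2 algebra_simps)
  show "qp - qm = 2*(mup-mum)*(n \<bullet> (Ap *v n))"
    using r(2) by (simp add: inner2 mv2)
qed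

lemma lin_integral: "((\<lambda>\<tau>::real. c0 + \<tau>*c1) has_integral (c0 + c1/2)) {0..1}"
proof -
  have "((\<lambda>\<tau>::real. c0 + \<tau>*c1) has_integral ((\<lambda>\<tau>. c0*\<tau> + c1*\<tau>^2/2) 1 - (\<lambda>\<tau>. c0*\<tau> + c1*\<tau>^2/2) 0)) {0..1}"
    by (rule fundamental_theorem_of_calculus)
       (auto intro!: derivative_eq_intros simp: has_real_derivative_iff_has_vector_derivative[symmetric] algebra_simps)
  then show ?thesis by simp
qed

lemma edge:
  fixes Ap Am :: "real^2^2" and t n :: "real^2"
  assumes vm: "\<forall>y. Am *v y + bm = Ap *v y + bp - (\<beta>*(n \<bullet> y - d)) *\<^sub>R t"
  shows "edge_avg (\<lambda>x. pw n d (\<lambda>x. Ap *v x + bp) (\<lambda>x. Am *v x + bm) x $ k) p q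
     = (Ap *v ((1/2) *\<^sub>R (p+q)) + bp)$k - \<beta> * t$k * Fm (n \<bullet> p - d) (n \<bullet> q - d)"
proof -
  have pwe: "pw n d (\<lambda>x. Ap *v x + bp) (\<lambda>x. Am *v x + bm) x = Ap *v x + bp - (\<beta> * min (n \<bullet> x - d) 0) *\<^sub>R t" for x
    using vm unfolding pw_def by (auto simp: min_def)
  define c0 where "c0 = (Ap *v p + bp)$k"
  define c1 where "c1 = (Ap *v (q-p))$k"
  define x where "x = n \<bullet> p - d"
  define y where "y = n \<bullet> q - d"
  have fe: "(\<lambda>\<tau>. pw n d (\<lambda>x. Ap *v x + bp) (\<lambda>x. Am *v x + bm) (p + \<tau> *\<^sub>R (q - p)) $ k)
     = (\<lambda>\<tau>. (c0 + \<tau>*c1) - (\<beta> * t$k) * min (x + \<tau>*(y-x)) 0)"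
    unfolding pwe c0_def c1_def x_def y_def
    by (auto simp: matrix_vector_right_distrib matrix_vector_mult_scaleR inner_add_right inner_diff_right algebra_simps)
  have "((\<lambda>\<tau>. (c0 + \<tau>*c1) - (\<beta> * t$k) * min (x + \<tau>*(y-x)) 0) has_integral
      ((c0 + c1/2) - (\<beta> * t$k) * Fm x y)) {0..1}"
    by (intro has_integral_diff lin_integral has_integral_mult_right Fm_integral)
  then have "edge_avg (\<lambda>x. pw n d (\<lambda>x. Ap *v x + bp) (\<lambda>x. Am *v x + bm) x $ k) p q = (c0 + c1/2) - (\<beta> * t$k) * Fm x y"
    unfolding edge_avg_def fe by (rule integral_unique)
  moreover have "c0 + c1/2 = (Ap *v ((1/2) *\<^sub>R (p+q)) + bp)$k"
    unfolding c0_def c1_def by (simp add: matrix_vector_right_distrib matrix_vector_mult_scaleR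
       matrix_vector_mult_diff_distrib field_simps)
  ultimately show ?thesis by (simp add: x_def y_def)
qed

lemma pressure:
  fixes n :: "real^2"
  assumes T: "compact T" and mT: "measure lebesgue T > 0"
  shows "\<exists>l. 0 \<le> l \<and> l \<le> 1 \<and>
    integral T (pw n d (\<lambda>x. qp) (\<lambda>x. qm)) / measure lebesgue T = qm + l*(qp - qm)"
proof -
  define H where "H = {x. n \<bullet> x > d}"
  have Ho: "open H" unfolding H_def by (intro open_Collect_less continuous_intros)
  have Hs: "H \<in> sets lebesgue" by (metis Ho borel_open sets_completionI_sets sets_lborel)
  have Tl: "T \<in> lmeasurable" using T by (rule lmeasurable_compact)
  have HT: "H \<inter> T \<in> lmeasurable" using fmeasurable_Int_fmeasurable[OF Tl Hs] by (simp add: Int_commute)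
  have fe: "pw n d (\<lambda>x. qp) (\<lambda>x. qm) = (\<lambda>x. qm + (qp - qm) * indicator H x)"
    unfolding pw_def H_def by (auto simp: indicator_def)
  have i1: "((\<lambda>x. qm) has_integral (qm * measure lebesgue T)) T"
  proof -
    have "((\<lambda>x. 1::real) has_integral measure lebesgue T) T"
      using Tl lmeasure_integral[OF Tl] lmeasurable_iff_integrable_on by (metis integrable_integral)
    from has_integral_mult_left[OF this, of qm] show ?thesis by (simp add: mult.commute)
  qed
  have i2: "(indicator H has_integral measure lebesgue (H \<inter> T)) T"
  proof -
    have "(\<lambda>x. 1::real) integrable_on (H \<inter> T)" using HT lmeasurable_iff_integrable_on by blast
    then have "(\<lambda>x. if x \<in> H then 1::real else 0) integrable_on T" using integrable_restrict_Int[of H "\<lambda>x. 1::real" T] by simp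
    moreover have "(\<lambda>x. if x \<in> H then 1::real else 0) = indicator H" by (auto simp: indicator_def)
    ultimately have "(indicator H :: real^2 \<Rightarrow> real) integrable_on T" by simp
    then show ?thesis using integral_indicator[OF HT] by (metis integrable_integral)
  qed
  have "((\<lambda>x. qm + (qp - qm) * indicator H x) has_integral
     (qm * measure lebesgue T + (qp - qm) * measure lebesgue (H \<inter> T))) T"
    by (intro has_integral_add i1 has_integral_mult_right i2)
  then have I: "integral T (pw n d (\<lambda>x. qp) (\<lambda>x. qm)) = qm * measure lebesgue T + (qp - qm) * measure lebesgue (H \<inter> T)"
    unfolding fe by (rule integral_unique)
  define l where "l = measure lebesgue (H \<inter> T) / measure lebesgue T"
  have "measure lebesgue (H \<inter> T) \<le> measure lebesgue T"
    using measure_mono_fmeasurable[of "H \<inter> T" T lebesgue] HT Tl by auto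
  then have "0 \<le> l" "l \<le> 1" using mT unfolding l_def by (auto simp: divide_le_eq)
  moreover have "integral T (pw n d (\<lambda>x. qp) (\<lambda>x. qm)) / measure lebesgue T = qm + l*(qp - qm)"
    unfolding I l_def using mT by (simp add: field_simps)
  ultimately show ?thesis by blast
qed

lemma geom:
  fixes a b c :: "real^2"
  assumes nc: "\<not> collinear {a,b,c}" and hr: "diameter (tri a b c) \<le> rho * inradius (tri a b c)"
  shows "diameter (tri a b c) > 0" and "rho > 0" and "compact (tri a b c)"
    and "a \<in> tri a b c" "b \<in> tri a b c" "c \<in> tri a b c" and "convex (tri a b c)"
    and "\<exists>x0 r. r > 0 \<and> cball x0 r \<subseteq> tri a b c \<and> diameter (tri a b c) \<le> 2*rho*r"
    and "measure lebesgue (tri a b c) > 0"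
proof -
  let ?T = "tri a b c"
  show cT: "compact ?T" unfolding tri_def by (intro compact_convex_hull finite_imp_compact) simp
  show cv: "convex ?T" unfolding tri_def by simp
  show aT: "a \<in> ?T" "b \<in> ?T" "c \<in> ?T" unfolding tri_def by (simp_all add: hull_inc)
  have bT: "bounded ?T" using cT compact_imp_bounded by blast
  have "a \<noteq> b" using nc by auto
  then have "dist a b > 0" by simp
  moreover have "dist a b \<le> diameter ?T" using diameter_bounded_bound[OF bT aT(1) aT(2)] .
  ultimately show hp: "diameter ?T > 0" by linarith
  define S where "S = {r. \<exists>x. cball x r \<subseteq> ?T}"
  have inr: "inradius ?T = Sup S" unfolding inradius_def S_def ..
  have S0: "0 \<in> S" unfolding S_def using aT(1) by (intro CollectI exI[of _ a]) simp
  have Sb: "r \<le> diameter ?T" if rin: "r \<in> S" for r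
  proof (cases "r \<le> 0")
    case True then show ?thesis using hp by linarith
  next
    case False
    obtain x where x: "cball x r \<subseteq> ?T" using rin unfolding S_def by blast
    define e :: "real^2" where "e = axis 1 1"
    have ne: "norm e = 1" unfolding e_def by (simp add: norm_axis_1)
    have p: "x + r *\<^sub>R e \<in> ?T" "x - r *\<^sub>R e \<in> ?T" using x False ne by (auto simp: subset_iff dist_norm)
    have "dist (x + r *\<^sub>R e) (x - r *\<^sub>R e) = 2*r"
      using ne False by (simp add: dist_norm scaleR_2[symmetric] algebra_simps)
    with diameter_bounded_bound[OF bT p] False show ?thesis by linarith
  qed
  have bdd: "bdd_above S" using Sb by (auto simp: bdd_above_def)
  have inr0: "inradius ?T \<ge> 0" unfolding inr using cSup_upper[OF S0 bdd] .
  have rp: "rho * inradius ?T > 0" using hr hp by linarith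
  then have rho: "rho > 0" and inrp: "inradius ?T > 0" using inr0 by (auto simp: zero_less_mult_iff)
  then show "rho > 0" by simp
  have "inradius ?T / 2 < Sup S" using inrp inr by simp
  then obtain r where rS: "r \<in> S" and rl: "inradius ?T / 2 < r" using less_cSup_iff[of S] S0 bdd by blast
  obtain x0 where x0: "cball x0 r \<subseteq> ?T" using rS unfolding S_def by blast
  have r0: "r > 0" using rl inrp by linarith
  have "diameter ?T \<le> 2*rho*r"
  proof -
    have "rho * inradius ?T \<le> rho * (2*r)" using rl rho by (intro mult_left_mono) auto
    then show ?thesis using hr by simp
  qed
  then show "\<exists>x0 r. r > 0 \<and> cball x0 r \<subseteq> ?T \<and> diameter ?T \<le> 2*rho*r" using r0 x0 by blast
  have Tl: "?T \<in> lmeasurable" using cT by (rule lmeasurable_compact)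
  have "measure lebesgue (cball x0 r) \<le> measure lebesgue ?T"
    by (rule measure_mono_fmeasurable[OF x0]) (use Tl in auto)
  moreover have "measure lebesgue (cball x0 r) > 0"
    using content_cball_pos[OF r0, of x0] by simp
  ultimately show "measure lebesgue ?T > 0" by linarith
qed

theorem lemma4p5:
  fixes mup mum rho :: real
  assumes "mup > 0" and "mum > 0"
  shows "\<exists>C>0. \<forall>(a::real^2) b c (n::real^2) (d::real) (i::nat)
            (Ap::real^2^2) (bp::real^2) (qp::real) (Am::real^2^2) (bm::real^2) (qm::real).
     (\<not> collinear {a, b, c}
      \<and> diameter (tri a b c) \<le> rho * inradius (tri a b c)
      \<and> norm n = 1
      \<and> Tplus (tri a b c) n d \<noteq> {} \<and> Tminus (tri a b c) n d \<noteq> {}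
      \<and> i \<in> {1..7}
      \<and> is_ife mup mum (tri a b c) n d Ap bp qp Am bm qm
      \<and> (\<forall>j\<in>{1..7}. dof a b c n d Ap bp qp Am bm qm j = (if j = i then 1 else 0)))
     \<longrightarrow>
     (i \<le> 6 \<longrightarrow>
        (\<forall>x \<in> tri a b c. norm (Ap *v x + bp) \<le> C \<and> norm (Am *v x + bm) \<le> C)
        \<and> norm Ap \<le> C / diameter (tri a b c) \<and> norm Am \<le> C / diameter (tri a b c)
        \<and> \<bar>qp\<bar> \<le> C / diameter (tri a b c) \<and> \<bar>qm\<bar> \<le> C / diameter (tri a b c))
     \<and> (i = 7 \<longrightarrow>
        (\<forall>x \<in> tri a b c. Ap *v x + bp = 0 \<and> Am *v x + bm = 0)
        \<and> Ap = 0 \<and> Am = 0 \<and> \<bar>qp\<bar> = 1 \<and> \<bar>qm\<bar> = 1)"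
proof -
  define P where "P = \<bar>rho\<bar> + 1"
  define mn where "mn = min mup mum"
  define R where "R = \<bar>mup - mum\<bar>"
  define B where "B = 24*P*R/mn"
  define C where "C = 4*(12*P + 2*B) + 6 + 4*B + 2*R*(12*P + B) + 1"
  have mn0: "mn > 0" using assms unfolding mn_def by simp
  have P0: "P \<ge> 1" "rho \<le> P" unfolding P_def by auto
  have R0: "R \<ge> 0" unfolding R_def by simp
  have B0: "B \<ge> 0" unfolding B_def using P0 R0 mn0 by simp
  have "0 \<le> 2*R*(12*P + B)" using P0 R0 B0 by simp
  moreover have "0 \<le> 4*(12*P + 2*B) + 6 + 4*B" using P0 B0 by simp
  ultimately have "0 \<le> 4*(12*P + 2*B) + 6 + 4*B + 2*R*(12*P + B)" by (rule add_nonneg_nonneg[rotated])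
  moreover have "C = (4*(12*P + 2*B) + 6 + 4*B + 2*R*(12*P + B)) + 1" unfolding C_def by simp
  ultimately have C0: "C > 0" by linarith
  show ?thesis
  proof (intro exI[of _ C] conjI[OF C0] allI impI)
    fix a b c n :: "real^2" and d :: real and i :: nat and Ap Am :: "real^2^2" and bp bm :: "real^2"
      and qp qm :: real
    assume H: "\<not> collinear {a, b, c}
      \<and> diameter (tri a b c) \<le> rho * inradius (tri a b c)
      \<and> norm n = 1
      \<and> Tplus (tri a b c) n d \<noteq> {} \<and> Tminus (tri a b c) n d \<noteq> {}
      \<and> i \<in> {1..7}
      \<and> is_ife mup mum (tri a b c) n d Ap bp qp Am bm qm
      \<and> (\<forall>j\<in>{1..7}. dof a b c n d Ap bp qp Am bm qm j = (if j = i then 1 else 0))"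
    then have nc: "\<not> collinear {a, b, c}" and hr: "diameter (tri a b c) \<le> rho * inradius (tri a b c)"
      and nn: "norm n = 1" and Tp: "Tplus (tri a b c) n d \<noteq> {}" and Tm: "Tminus (tri a b c) n d \<noteq> {}"
      and iI: "i \<in> {1..7}" and ife: "is_ife mup mum (tri a b c) n d Ap bp qp Am bm qm"
      and dofs: "\<forall>j\<in>{1..7}. dof a b c n d Ap bp qp Am bm qm j = (if j = i then 1 else 0)"
      by auto
    define T where "T = tri a b c"
    define h where "h = diameter T"
    note G = geom[OF nc hr, folded T_def h_def]
    have h0: "h > 0" and rho0: "rho > 0" and cT: "compact T" and vT: "a \<in> T" "b \<in> T" "c \<in> T"
      and cvT: "convex T" and mT: "measure lebesgue T > 0" using G by auto
    obtain x0 r where r0: "r > 0" and ball: "cball x0 r \<subseteq> T" and hrr: "h \<le> 2*rho*r" using G by blast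
    have bT: "bounded T" using cT compact_imp_bounded by blast
    have st: "(mup *\<^sub>R (Ap + transpose Ap) - qp *\<^sub>R mat 1) *v n = (mum *\<^sub>R (Am + transpose Am) - qm *\<^sub>R mat 1) *v n"
      and cont: "\<forall>x\<in>Gamma T n d. Ap *v x + bp = Am *v x + bm" and tr: "trace Ap = trace Am"
      using ife unfolding is_ife_def T_def by auto
    define t where "t = (vector [-(n$2), n$1] :: real^2)"
    define \<beta> where "\<beta> = t \<bullet> ((Ap - Am) *v n)"
    note IF = interface[OF nn Tp[folded T_def] Tm[folded T_def] cvT cont tr, folded t_def, folded \<beta>_def]
    have lin: "\<forall>y. Am *v y = Ap *v y - (\<beta>*(n \<bullet> y)) *\<^sub>R t"
      and vmf: "\<forall>y. Am *v y + bm = Ap *v y + bp - (\<beta>*(n \<bullet> y - d)) *\<^sub>R t"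
      and nt: "norm t = 1" and nt0: "n \<bullet> t = 0" and t1: "t$1 = -(n$2)" and t2: "t$2 = n$1"
      using IF by auto
    note STR = stress[OF lin t1 t2 nn st]
    have R1: "(mup-mum)*(t \<bullet> (Ap *v n) + n \<bullet> (Ap *v t)) + mum*\<beta> = 0"
      and R2: "qp - qm = 2*(mup-mum)*(n \<bullet> (Ap *v n))" using STR by auto
    have nn1: "n \<bullet> n = 1" using nn by (simp add: dot_square_norm)
    have tt1: "t \<bullet> t = 1" using nt by (simp add: dot_square_norm)
    have tn0: "t \<bullet> n = 0" using nt0 by (simp add: inner_commute)
    obtain xp where xp: "xp \<in> T" "n \<bullet> xp > d" using Tp unfolding Tplus_def T_def
      using interior_subset by blast
    obtain xm where xm: "xm \<in> T" "n \<bullet> xm < d" using Tm unfolding Tminus_def T_def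
      using interior_subset by blast
    have psi: "\<bar>n \<bullet> y - d\<bar> \<le> h" if "y \<in> T" for y
    proof -
      have "\<bar>n \<bullet> (y - xm)\<bar> \<le> norm (y - xm)" using Cauchy_Schwarz_ineq2[of n "y - xm"] nn by simp
      also have "\<dots> \<le> h" unfolding h_def using diameter_bounded_bound[OF bT that xm(1)] by (simp add: dist_norm)
      finally have 1: "\<bar>n \<bullet> (y - xm)\<bar> \<le> h" .
      have "\<bar>n \<bullet> (y - xp)\<bar> \<le> norm (y - xp)" using Cauchy_Schwarz_ineq2[of n "y - xp"] nn by simp
      also have "\<dots> \<le> h" unfolding h_def using diameter_bounded_bound[OF bT that xp(1)] by (simp add: dist_norm)
      finally have 2: "\<bar>n \<bullet> (y - xp)\<bar> \<le> h" .
      show ?thesis using 1 2 xp xm by (simp add: inner_diff_right abs_le_iff)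
    qed
    obtain s \<kappa> where s01: "0 \<le> s" "s \<le> 1"
      and Fb: "Fm (n \<bullet> b - d) (n \<bullet> c - d) = s*((n \<bullet> b - d)+(n \<bullet> c - d))/2 + \<kappa>"
      and Fc: "Fm (n \<bullet> c - d) (n \<bullet> a - d) = s*((n \<bullet> c - d)+(n \<bullet> a - d))/2 + \<kappa>"
      and Fa: "Fm (n \<bullet> a - d) (n \<bullet> b - d) = s*((n \<bullet> a - d)+(n \<bullet> b - d))/2 + \<kappa>"
      using Pabc_all[of "n \<bullet> a - d" "n \<bullet> b - d" "n \<bullet> c - d"] unfolding Pabc_def by blast
    define gw where "gw = (\<lambda>y. Ap *v y - (\<beta>* s*(n \<bullet> y)) *\<^sub>R t)"
    define cw where "cw = bp - (\<beta>*(\<kappa> - s*d)) *\<^sub>R t"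
    have wlin: "linear gw" unfolding gw_def
      by (rule linearI) (simp_all add: matrix_vector_right_distrib matrix_vector_mult_scaleR
          inner_add_right algebra_simps scaleR_add_left)
    have wform: "gw y + cw = Ap *v y + bp - (\<beta>*(s*(n \<bullet> y - d) + \<kappa>)) *\<^sub>R t" for y
      unfolding gw_def cw_def by (simp add: algebra_simps scaleR_add_left scaleR_diff_left)
    have wm: "(gw ((1/2) *\<^sub>R (p+q)) + cw) $ k = (Ap *v ((1/2) *\<^sub>R (p+q)) + bp)$k - \<beta> * t$k * Fm (n \<bullet> p - d) (n \<bullet> q - d)"
      if F: "Fm (n \<bullet> p - d) (n \<bullet> q - d) = s*((n \<bullet> p - d)+(n \<bullet> q - d))/2 + \<kappa>" for p q k
      unfolding wform F by (simp add: inner_add_right field_simps)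
    have dj: "dof a b c n d Ap bp qp Am bm qm j = (if j = i then 1 else 0)" if "j \<in> {1..7}" for j
      using dofs that by blast
    have ed: "edge_avg (\<lambda>x. pw n d (\<lambda>x. Ap *v x + bp) (\<lambda>x. Am *v x + bm) x $ k) p q
     = (Ap *v ((1/2) *\<^sub>R (p+q)) + bp)$k - \<beta> * t$k * Fm (n \<bullet> p - d) (n \<bullet> q - d)" for k p q
      by (rule edge[OF vmf])
    have dd0: "dof a b c n d Ap bp qp Am bm qm 1 = (Ap *v ((1/2) *\<^sub>R (b+c)) + bp)$1 - \<beta> * t$1 * Fm (n \<bullet> b - d) (n \<bullet> c - d)"
       "dof a b c n d Ap bp qp Am bm qm 2 = (Ap *v ((1/2) *\<^sub>R (c+a)) + bp)$1 - \<beta> * t$1 * Fm (n \<bullet> c - d) (n \<bullet> a - d)"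
       "dof a b c n d Ap bp qp Am bm qm 3 = (Ap *v ((1/2) *\<^sub>R (a+b)) + bp)$1 - \<beta> * t$1 * Fm (n \<bullet> a - d) (n \<bullet> b - d)"
       "dof a b c n d Ap bp qp Am bm qm 4 = (Ap *v ((1/2) *\<^sub>R (b+c)) + bp)$2 - \<beta> * t$2 * Fm (n \<bullet> b - d) (n \<bullet> c - d)"
       "dof a b c n d Ap bp qp Am bm qm 5 = (Ap *v ((1/2) *\<^sub>R (c+a)) + bp)$2 - \<beta> * t$2 * Fm (n \<bullet> c - d) (n \<bullet> a - d)"
       "dof a b c n d Ap bp qp Am bm qm 6 = (Ap *v ((1/2) *\<^sub>R (a+b)) + bp)$2 - \<beta> * t$2 * Fm (n \<bullet> a - d) (n \<bullet> b - d)"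
      by (simp_all only: dof_def Let_def edge_start_def edge_end_def ed) simp_all
    have dd: "dof a b c n d Ap bp qp Am bm qm 1 = (gw ((1/2) *\<^sub>R (b+c)) + cw) $ 1"
       "dof a b c n d Ap bp qp Am bm qm 2 = (gw ((1/2) *\<^sub>R (c+a)) + cw) $ 1"
       "dof a b c n d Ap bp qp Am bm qm 3 = (gw ((1/2) *\<^sub>R (a+b)) + cw) $ 1"
       "dof a b c n d Ap bp qp Am bm qm 4 = (gw ((1/2) *\<^sub>R (b+c)) + cw) $ 2"
       "dof a b c n d Ap bp qp Am bm qm 5 = (gw ((1/2) *\<^sub>R (c+a)) + cw) $ 2"
       "dof a b c n d Ap bp qp Am bm qm 6 = (gw ((1/2) *\<^sub>R (a+b)) + cw) $ 2"
      by (simp_all only: dd0 wm[OF Fb] wm[OF Fc] wm[OF Fa])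
    have dbound: "\<bar>dof a b c n d Ap bp qp Am bm qm j\<bar> \<le> 1" "i = 7 \<Longrightarrow> dof a b c n d Ap bp qp Am bm qm j = 0"
      if "j \<in> {1..6}" for j using dj[of j] that by auto
    define M where "M = norm (gw ((1/2) *\<^sub>R (b+c)) + cw) + norm (gw ((1/2) *\<^sub>R (c+a)) + cw)
       + norm (gw ((1/2) *\<^sub>R (a+b)) + cw)"
    have n2: "norm (v::real^2) \<le> \<bar>v$1\<bar> + \<bar>v$2\<bar>" for v using norm_le_l1_cart[of v] by (simp add: sum_2)
    define W1 where "W1 = gw ((1/2) *\<^sub>R (b+c)) + cw"
    define W2 where "W2 = gw ((1/2) *\<^sub>R (c+a)) + cw"
    define W3 where "W3 = gw ((1/2) *\<^sub>R (a+b)) + cw"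
    have Mdef: "M = norm W1 + norm W2 + norm W3" unfolding M_def W1_def W2_def W3_def ..
    have ddW: "dof a b c n d Ap bp qp Am bm qm 1 = W1$1" "dof a b c n d Ap bp qp Am bm qm 4 = W1$2"
      "dof a b c n d Ap bp qp Am bm qm 2 = W2$1" "dof a b c n d Ap bp qp Am bm qm 5 = W2$2"
      "dof a b c n d Ap bp qp Am bm qm 3 = W3$1" "dof a b c n d Ap bp qp Am bm qm 6 = W3$2"
      unfolding W1_def W2_def W3_def using dd by simp_all
    have j16: "(1::nat) \<in> {1..6}" "(2::nat) \<in> {1..6}" "(3::nat) \<in> {1..6}" "(4::nat) \<in> {1..6}"
      "(5::nat) \<in> {1..6}" "(6::nat) \<in> {1..6}" by simp_all
    have M6: "M \<le> 6"
    proof -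
      have "\<bar>W1$1\<bar> \<le> 1" "\<bar>W1$2\<bar> \<le> 1" "\<bar>W2$1\<bar> \<le> 1" "\<bar>W2$2\<bar> \<le> 1" "\<bar>W3$1\<bar> \<le> 1" "\<bar>W3$2\<bar> \<le> 1"
        using dbound(1)[OF j16(1)] dbound(1)[OF j16(2)] dbound(1)[OF j16(3)] dbound(1)[OF j16(4)]
          dbound(1)[OF j16(5)] dbound(1)[OF j16(6)] unfolding ddW by simp_all
      then show ?thesis unfolding Mdef using n2[of W1] n2[of W2] n2[of W3] by linarith
    qed
    have M7: "M = 0" if i7: "i = 7"
    proof -
      have "W1$1 = 0" "W1$2 = 0" "W2$1 = 0" "W2$2 = 0" "W3$1 = 0" "W3$2 = 0"
        using dbound(2)[OF j16(1) i7] dbound(2)[OF j16(2) i7] dbound(2)[OF j16(3) i7] dbound(2)[OF j16(4) i7]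
          dbound(2)[OF j16(5) i7] dbound(2)[OF j16(6) i7] unfolding ddW by simp_all
      then have "W1 = 0" "W2 = 0" "W3 = 0" unfolding vec_eq_iff forall_2 by simp_all
      then show ?thesis unfolding Mdef by simp
    qed
    have M0: "M \<ge> 0" unfolding M_def by simp
    have wb: "norm (gw y + cw) \<le> M" if "y \<in> T" for y
      using aff_mid_bound[OF wlin that[unfolded T_def], of cw] unfolding M_def .
    have F1: "norm (gw e) \<le> M/r" if "norm e = 1" for e
      by (rule ball_grad[OF wlin r0 ball wb that])
    define X where "X = t \<bullet> gw n + n \<bullet> gw t"
    have Xe: "X = t \<bullet> (Ap *v n) + n \<bullet> (Ap *v t) - \<beta>* s"
      unfolding X_def gw_def using nn1 tt1 nt0 by (simp add: inner_diff_right)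
    have F2: "\<bar>X\<bar> \<le> 2*(M/r)"
    proof -
      have "\<bar>t \<bullet> gw n\<bar> \<le> M/r" using Cauchy_Schwarz_ineq2[of t "gw n"] nt F1[OF nn] by simp
      moreover have "\<bar>n \<bullet> gw t\<bar> \<le> M/r" using Cauchy_Schwarz_ineq2[of n "gw t"] nn F1[OF nt] by simp
      ultimately show ?thesis unfolding X_def by linarith
    qed
    define K where "K = mum + (mup - mum)* s"
    have K0: "K \<ge> mn"
    proof -
      have "K = (1-s)*mum + s*mup" unfolding K_def by (simp add: algebra_simps)
      also have "\<dots> \<ge> (1-s)*mn + s*mn" using s01 unfolding mn_def
        by (intro add_mono mult_left_mono) auto
      finally show ?thesis by (simp add: algebra_simps)
    qed
    have bK: "\<beta>*K = -(mup-mum)*X" using R1 unfolding Xe K_def by (simp add: algebra_simps)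
    have F3: "\<bar>\<beta>\<bar>*mn \<le> R*\<bar>X\<bar>"
    proof -
      have "\<bar>\<beta>\<bar>*mn \<le> \<bar>\<beta>\<bar>*K" using K0 by (simp add: mult_left_mono)
      also have "\<dots> = R*\<bar>X\<bar>" using arg_cong[OF bK, of abs] K0 mn0 unfolding R_def by (simp add: abs_mult abs_minus_commute)
      finally show ?thesis .
    qed
    have Apf: "Ap *v e = gw e + (\<beta>* s*(n \<bullet> e)) *\<^sub>R t" for e unfolding gw_def by simp
    have F4: "norm (Ap *v e) \<le> M/r + \<bar>\<beta>\<bar>" if "norm e = 1" for e
    proof -
      have "\<bar>n \<bullet> e\<bar> \<le> 1" using Cauchy_Schwarz_ineq2[of n e] nn that by simp
      then have "\<bar>s*(n \<bullet> e)\<bar> \<le> 1" using s01 by (simp add: abs_mult mult_le_one)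
      then have "norm ((\<beta>* s*(n \<bullet> e)) *\<^sub>R t) \<le> \<bar>\<beta>\<bar>" using nt
        by (simp add: abs_mult mult.assoc mult_left_le)
      then show ?thesis unfolding Apf using F1[OF that] norm_triangle_ineq[of "gw e" "(\<beta>* s*(n \<bullet> e)) *\<^sub>R t"]
        by linarith
    qed
    have F5: "norm (Am *v e) \<le> M/r + 2*\<bar>\<beta>\<bar>" if "norm e = 1" for e
    proof -
      have "\<bar>n \<bullet> e\<bar> \<le> 1" using Cauchy_Schwarz_ineq2[of n e] nn that by simp
      then have "norm ((\<beta>*(n \<bullet> e)) *\<^sub>R t) \<le> \<bar>\<beta>\<bar>" using nt
        by (simp add: abs_mult mult_left_le)
      then show ?thesis using lin F4[OF that] norm_triangle_ineq4[of "Ap *v e" "(\<beta>*(n \<bullet> e)) *\<^sub>R t"]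
        by simp
    qed
    have F6: "norm Ap \<le> 4*(M/r + \<bar>\<beta>\<bar>)" "norm Am \<le> 4*(M/r + 2*\<bar>\<beta>\<bar>)"
      using mat_norm_cols[of Ap] mat_norm_cols[of Am] F4[of "axis 1 1"] F4[of "axis 2 1"]
        F5[of "axis 1 1"] F5[of "axis 2 1"] by simp_all
    have zb: "\<bar>s*(n \<bullet> y - d) + \<kappa>\<bar> \<le> 3*h" if "y \<in> T" for y
    proof -
      have zl: "linear (\<lambda>y. s*(n \<bullet> y))" by (rule linearI) (simp_all add: inner_add_right algebra_simps)
      have "norm (s*(n \<bullet> y) + (\<kappa> - s*d)) \<le> norm (s*(n \<bullet> ((1/2) *\<^sub>R (b+c))) + (\<kappa> - s*d))
        + norm (s*(n \<bullet> ((1/2) *\<^sub>R (c+a))) + (\<kappa> - s*d)) + norm (s*(n \<bullet> ((1/2) *\<^sub>R (a+b))) + (\<kappa> - s*d))"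
        by (rule aff_mid_bound[OF zl that[unfolded T_def]])
      moreover have "s*(n \<bullet> ((1/2) *\<^sub>R (p+q))) + (\<kappa> - s*d) = Fm (n \<bullet> p - d) (n \<bullet> q - d)"
        if F: "Fm (n \<bullet> p - d) (n \<bullet> q - d) = s*((n \<bullet> p - d)+(n \<bullet> q - d))/2 + \<kappa>" for p q
        unfolding F by (simp add: inner_add_right field_simps)
      moreover have "\<bar>Fm (n \<bullet> p - d) (n \<bullet> q - d)\<bar> \<le> h" if "p \<in> T" "q \<in> T" for p q
        using Fm_bound psi that by blast
      moreover have "s*(n \<bullet> y - d) + \<kappa> = s*(n \<bullet> y) + (\<kappa> - s*d)" by (simp add: algebra_simps)
      ultimately show ?thesis using Fa Fb Fc vT by (smt (verit) real_norm_def)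
    qed
    have F7: "norm (Ap *v y + bp) \<le> M + 3*h*\<bar>\<beta>\<bar>" "norm (Am *v y + bm) \<le> M + 4*h*\<bar>\<beta>\<bar>" if "y \<in> T" for y
    proof -
      have e: "Ap *v y + bp = (gw y + cw) + (\<beta>*(s*(n \<bullet> y - d) + \<kappa>)) *\<^sub>R t" unfolding wform by simp
      have "norm ((\<beta>*(s*(n \<bullet> y - d) + \<kappa>)) *\<^sub>R t) \<le> \<bar>\<beta>\<bar> * (3*h)"
        using nt zb[OF that] by (simp add: abs_mult mult_left_mono)
      then show 1: "norm (Ap *v y + bp) \<le> M + 3*h*\<bar>\<beta>\<bar>" unfolding e
        using wb[OF that] norm_triangle_ineq[of "gw y + cw" "(\<beta>*(s*(n \<bullet> y - d) + \<kappa>)) *\<^sub>R t"]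
        by (simp add: algebra_simps)
      have "norm ((\<beta>*(n \<bullet> y - d)) *\<^sub>R t) \<le> \<bar>\<beta>\<bar> * h"
        using nt psi[OF that] by (simp add: abs_mult mult_left_mono)
      moreover have "norm (Am *v y + bm) \<le> norm (Ap *v y + bp) + norm ((\<beta>*(n \<bullet> y - d)) *\<^sub>R t)"
        unfolding vmf[rule_format] by (rule norm_triangle_ineq4)
      ultimately show "norm (Am *v y + bm) \<le> M + 4*h*\<bar>\<beta>\<bar>" using 1 by (simp add: algebra_simps)
    qed
    have F8: "\<bar>qp - qm\<bar> \<le> 2*R*(M/r + \<bar>\<beta>\<bar>)"
    proof -
      have "\<bar>n \<bullet> (Ap *v n)\<bar> \<le> M/r + \<bar>\<beta>\<bar>" using Cauchy_Schwarz_ineq2[of n "Ap *v n"] nn F4[OF nn] by simp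
      then have "R * \<bar>n \<bullet> (Ap *v n)\<bar> \<le> R * (M/r + \<bar>\<beta>\<bar>)" using R0 by (rule mult_left_mono)
      moreover have "\<bar>qp - qm\<bar> = 2 * (R * \<bar>n \<bullet> (Ap *v n)\<bar>)" unfolding R2 R_def abs_mult by simp
      ultimately show ?thesis by simp
    qed
    obtain l where l01: "0 \<le> l" "l \<le> 1"
      and F9: "integral T (pw n d (\<lambda>x. qp) (\<lambda>x. qm)) / measure lebesgue T = qm + l*(qp - qm)"
      using pressure[OF cT mT] by blast
    have d7: "qm + l*(qp - qm) = (if i = 7 then 1 else 0)"
      using dj[of 7] F9 unfolding T_def by (simp add: dof_def Let_def)
    define Q where "Q = M/r"
    have Q0: "Q \<ge> 0" unfolding Q_def using M0 r0 by simp
    have hb0: "\<bar>\<beta>\<bar>*mn \<le> R*(2*Q)" using F3 F2 R0 unfolding Q_def by (meson mult_left_mono order_trans)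
    show "(i \<le> 6 \<longrightarrow>
        (\<forall>x \<in> tri a b c. norm (Ap *v x + bp) \<le> C \<and> norm (Am *v x + bm) \<le> C)
        \<and> norm Ap \<le> C / diameter (tri a b c) \<and> norm Am \<le> C / diameter (tri a b c)
        \<and> \<bar>qp\<bar> \<le> C / diameter (tri a b c) \<and> \<bar>qm\<bar> \<le> C / diameter (tri a b c))
     \<and> (i = 7 \<longrightarrow>
        (\<forall>x \<in> tri a b c. Ap *v x + bp = 0 \<and> Am *v x + bm = 0)
        \<and> Ap = 0 \<and> Am = 0 \<and> \<bar>qp\<bar> = 1 \<and> \<bar>qm\<bar> = 1)"
    proof (intro conjI impI)
      assume i6: "i \<le> 6"
      have Qh: "Q*h \<le> 12*P"
      proof -
        have "h/r \<le> 2*rho" using hrr r0 by (simp add: divide_le_eq mult.assoc)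
        moreover have "M*(h/r) \<le> 6*(h/r)" using M6 h0 r0 by (intro mult_right_mono) auto
        ultimately have "M*(h/r) \<le> 6*(2*P)" using P0 by linarith
        then show ?thesis unfolding Q_def by simp
      qed
      have bh: "\<bar>\<beta>\<bar>*h \<le> B"
      proof -
        have "(\<bar>\<beta>\<bar>*mn)*h \<le> (R*(2*Q))*h" using hb0 h0 by (simp add: mult_right_mono)
        also have "\<dots> = 2*R*(Q*h)" by simp
        also have "\<dots> \<le> 2*R*(12*P)" using Qh R0 by (intro mult_left_mono) auto
        finally have "(\<bar>\<beta>\<bar>*h)*mn \<le> 24*P*R" by (simp add: algebra_simps)
        then show ?thesis unfolding B_def using mn0 by (simp add: le_divide_eq)
      qed
      have Qhb: "Q*h \<ge> 0" "\<bar>\<beta>\<bar>*h \<ge> 0" using Q0 h0 by simp_all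
      have CC: "4*(12*P + B) \<le> C" "4*(12*P + 2*B) \<le> C" "6 + 3*B \<le> C" "6 + 4*B \<le> C"
        "2*R*(12*P + B) \<le> C" unfolding C_def using P0 R0 B0 by (simp_all add: mult_nonneg_nonneg)
      have "norm Ap * h \<le> 4*(Q*h + \<bar>\<beta>\<bar>*h)" using F6(1) h0 unfolding Q_def
        by (metis distrib_right mult.assoc mult_right_mono less_imp_le)
      also have "\<dots> \<le> 4*(12*P + B)" using Qh bh by (intro mult_left_mono add_mono) auto
      also have "\<dots> \<le> C" by (rule CC(1))
      finally have "norm Ap * h \<le> C" .
      then show "norm Ap \<le> C / diameter (tri a b c)" using h0 unfolding h_def T_def by (simp add: le_divide_eq)
      have "norm Am * h \<le> 4*(Q*h + 2*(\<bar>\<beta>\<bar>*h))" using F6(2) h0 unfolding Q_def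
        by (metis distrib_right mult.assoc mult_right_mono less_imp_le)
      also have "\<dots> \<le> 4*(12*P + 2*B)" using Qh bh by (intro mult_left_mono add_mono) auto
      also have "\<dots> \<le> C" by (rule CC(2))
      finally have "norm Am * h \<le> C" .
      then show "norm Am \<le> C / diameter (tri a b c)" using h0 unfolding h_def T_def by (simp add: le_divide_eq)
      show "\<forall>x \<in> tri a b c. norm (Ap *v x + bp) \<le> C \<and> norm (Am *v x + bm) \<le> C"
      proof
        fix x assume "x \<in> tri a b c"
        then have xT: "x \<in> T" unfolding T_def .
        have "h*\<bar>\<beta>\<bar> \<le> B" using bh by (simp add: mult.commute)
        then show "norm (Ap *v x + bp) \<le> C \<and> norm (Am *v x + bm) \<le> C"
          using F7[OF xT] M6 CC(3) CC(4) by linarith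
      qed
      have "\<bar>qp - qm\<bar> * h \<le> 2*R*(Q*h + \<bar>\<beta>\<bar>*h)" using F8 h0 unfolding Q_def
        by (metis distrib_right mult.assoc mult_right_mono less_imp_le)
      also have "\<dots> \<le> 2*R*(12*P + B)" using Qh bh R0 by (intro mult_left_mono) auto
      finally have qh: "\<bar>qp - qm\<bar> * h \<le> C" using CC(5) by (rule order_trans)
      have q0: "qm + l*(qp - qm) = 0" using d7 i6 by simp
      have "\<bar>qm\<bar> \<le> \<bar>qp - qm\<bar>"
      proof -
        have "qm = -(l*(qp - qm))" using q0 by (simp add: algebra_simps)
        then have "\<bar>qm\<bar> = \<bar>l*(qp - qm)\<bar>" by (metis abs_minus_cancel)
        then have "\<bar>qm\<bar> = l*\<bar>qp - qm\<bar>" using l01 by (simp add: abs_mult)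
        also have "\<dots> \<le> \<bar>qp - qm\<bar>" using l01 by (simp add: mult_left_le_one_le)
        finally show ?thesis .
      qed
      moreover have "\<bar>qp\<bar> \<le> \<bar>qp - qm\<bar>"
      proof -
        have "qp = (1-l)*(qp - qm)" using q0 by (simp add: algebra_simps)
        then have "\<bar>qp\<bar> = \<bar>(1-l)*(qp - qm)\<bar>" by (rule arg_cong[where f=abs])
        also have "\<dots> = (1-l)*\<bar>qp - qm\<bar>" using l01 by (simp add: abs_mult)
        also have "\<dots> \<le> \<bar>qp - qm\<bar>" using l01 by (simp add: mult_left_le_one_le)
        finally show ?thesis .
      qed
      ultimately have "\<bar>qm\<bar> * h \<le> C" "\<bar>qp\<bar> * h \<le> C" using qh h0
        by (meson mult_right_mono less_imp_le order_trans)+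
      then show "\<bar>qp\<bar> \<le> C / diameter (tri a b c)" "\<bar>qm\<bar> \<le> C / diameter (tri a b c)"
        using h0 unfolding h_def T_def by (simp_all add: le_divide_eq)
    next
      assume i7: "i = 7"
      have M00: "M = 0" using M7[OF i7] .
      have "\<bar>\<beta>\<bar>*mn \<le> 0" using hb0 unfolding Q_def M00 by simp
      then have b0: "\<beta> = 0" using mn0 by (simp add: mult_le_0_iff)
      have "norm Ap \<le> 0" "norm Am \<le> 0" using F6 unfolding M00 b0 by simp_all
      then show A0: "Ap = 0" "Am = 0" by simp_all
      show "\<forall>x \<in> tri a b c. Ap *v x + bp = 0 \<and> Am *v x + bm = 0"
      proof
        fix x assume "x \<in> tri a b c"
        then have xT: "x \<in> T" unfolding T_def .
        show "Ap *v x + bp = 0 \<and> Am *v x + bm = 0" using F7[OF xT] unfolding M00 b0 by simp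
      qed
      have "qp = qm" using R2 A0 by simp
      then show "\<bar>qp\<bar> = 1" "\<bar>qm\<bar> = 1" using d7 i7 by simp_all
    qed
  qed
qed

end
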